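(* Let $a\in\mathbb{R}$, $\lambda\in[0,1)$, and let $f=h+\overline{g}$ with $h(z)=z+\sum_{n\ge2}a_nz^n$, $g(z)=\sum_{n\ge1}b_nz^n$ analytic in $\mathbb{D}$, satisfying $h-g=k_a$ and $g'/h'=\lambda z$ in $\mathbb{D}$. Then $$|a_2|\le |a|+\frac{\lambda}{2},\qquad |a_3|\le\frac13\left(\lambda^2+2|a|\lambda+2a^2+1\right),$$ $$|a_4|\le \frac13|a|^3+\frac23|a|+\frac14\lambda\left(\lambda^2+2|a|\lambda+2a^2+1\right),$$ $$|b_3|\le\frac13\lambda^2+\frac23|a|\lambda,\qquad |b_4|\le\frac14\lambda\left(\lambda^2+2|a|\lambda+2a^2+1\right).$$ All of these inequalities are sharp.
   Context: $\mathbb{D}$ is the open unit disk. For $a\neq0$, $k_a(z)=\frac{1}{2a}\left[\left(\frac{1+z}{1-z}\right)^a-1\right]$ (principal branch), and $k_0(z)=\frac12\log\frac{1+z}{1-z}$. *)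

theory Defs
  imports "HOL-Complex_Analysis.Complex_Analysis"
begin

definition ka :: "real \<Rightarrow> complex \<Rightarrow> complex" where
  "ka a z = (if a = 0 then (1/2) * Ln ((1 + z) / (1 - z))
             else (1 / (2 * complex_of_real a)) *
                  (((1 + z) / (1 - z)) powr (complex_of_real a) - 1))"

definition taylor_coeff :: "(complex \<Rightarrow> complex) \<Rightarrow> nat \<Rightarrow> complex" where
  "taylor_coeff f n = (deriv ^^ n) f 0 / of_nat (fact n)"

end

theory Submission imports Defs begin

lemma ball_facts:
  fixes z :: complex assumes "z \<in> ball 0 1"
  shows "1 - z \<noteq> 0" "1 + z \<noteq> 0" "(1 + z) / (1 - z) \<notin> \<real>\<^sub>\<le>\<^sub>0" "1 - z^2 \<noteq> 0"
proof -
  have n: "norm z < 1" using assms by simp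
  show a: "1 - z \<noteq> 0" using n by auto
  show b: "1 + z \<noteq> 0" using n by (metis add.inverse_unique norm_minus_cancel norm_one less_irrefl)
  have "1 - z^2 = (1 - z) * (1 + z)" by (simp add: algebra_simps power2_eq_square)
  then show "1 - z^2 \<noteq> 0" using a b by simp
  have sq: "(Re z)^2 + (Im z)^2 < 1"
  proof -
    have "(norm z)^2 < 1" using n by (simp add: power_less_one_iff)
    then show ?thesis by (simp add: cmod_power2)
  qed
  have "Re ((1 + z) / (1 - z)) = (1 - (Re z)^2 - (Im z)^2) / ((1 - Re z)^2 + (Im z)^2)"
    by (simp add: Re_divide power2_eq_square algebra_simps)
  moreover have "(1 - Re z)^2 + (Im z)^2 > 0" 
  proof -
    have "Re z \<noteq> 1" using sq by auto
    then show ?thesis by (simp add: sum_power2_gt_zero_iff)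
  qed
  ultimately have "Re ((1 + z) / (1 - z)) > 0" using sq by simp
  then show "(1 + z) / (1 - z) \<notin> \<real>\<^sub>\<le>\<^sub>0" by (auto simp: complex_nonpos_Reals_iff)
qed

lemma ka_deriv:
  assumes z: "z \<in> ball 0 1"
  shows "(ka a has_field_derivative (2 * complex_of_real a * ka a z + 1) / (1 - z^2)) (at z)"
proof -
  note bf = ball_facts[OF z]
  define w where "w = (\<lambda>z::complex. (1 + z) / (1 - z))"
  have wd: "(w has_field_derivative 2 / (1 - z)^2) (at z)"
    unfolding w_def using bf(1)
    by (auto intro!: derivative_eq_intros simp: field_simps power2_eq_square)
  have wnz: "w z \<notin> \<real>\<^sub>\<le>\<^sub>0" using bf(3) by (simp add: w_def)
  have key: "2 / (1 - z)^2 / w z = 2 / (1 - z^2)"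
  proof -
    have "1 - z^2 = (1 - z) * (1 + z)" by (simp add: algebra_simps power2_eq_square)
    moreover have "(1 - z) * (1 - z) * (1 + z) \<noteq> 0" using bf(1,2) by simp
    ultimately show ?thesis using bf(1,2) unfolding w_def power2_eq_square
      by (simp add: divide_simps)
  qed
  show ?thesis
  proof (cases "a = 0")
    case True
    have e: "ka a = (\<lambda>z. (1/2) * Ln (w z))" using True by (auto simp: ka_def w_def fun_eq_iff)
    have "((\<lambda>z. (1/2) * Ln (w z)) has_field_derivative (1/2) * (inverse (w z) * (2 / (1 - z)^2))) (at z)"
      by (intro DERIV_cmult DERIV_chain2[OF has_field_derivative_Ln[OF wnz] wd])
    moreover have "(1/2) * (inverse (w z) * (2 / (1 - z)^2)) = (2 * complex_of_real a * ka a z + 1) / (1 - z^2)"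
      using key True by (simp add: field_simps)
    ultimately show ?thesis using e by simp
  next
    case False
    have wnz0: "w z \<noteq> 0" using wnz by auto
    have e: "\<forall>y \<in> ball 0 1. ka a y = (1 / (2 * complex_of_real a)) * (exp (complex_of_real a * Ln (w y)) - 1)"
    proof
      fix y :: complex assume y: "y \<in> ball 0 1"
      have "w y \<noteq> 0" using ball_facts(3)[OF y] by (auto simp: w_def)
      then show "ka a y = (1 / (2 * complex_of_real a)) * (exp (complex_of_real a * Ln (w y)) - 1)"
        using False by (simp add: ka_def w_def powr_def)
    qed
    have "((\<lambda>y. (1 / (2 * complex_of_real a)) * (exp (complex_of_real a * Ln (w y)) - 1)) has_field_derivative
          (1 / (2 * complex_of_real a)) * (exp (complex_of_real a * Ln (w z)) * (complex_of_real a * (inverse (w z) * (2 / (1 - z)^2))))) (at z)"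
    proof -
      have d1: "((\<lambda>y. exp (complex_of_real a * Ln (w y))) has_field_derivative
          exp (complex_of_real a * Ln (w z)) * (complex_of_real a * (inverse (w z) * (2 / (1 - z)^2)))) (at z)"
        by (intro DERIV_chain2[OF DERIV_exp] DERIV_cmult DERIV_chain2[OF has_field_derivative_Ln[OF wnz] wd])
      have d2: "((\<lambda>y. exp (complex_of_real a * Ln (w y)) - 1) has_field_derivative
          exp (complex_of_real a * Ln (w z)) * (complex_of_real a * (inverse (w z) * (2 / (1 - z)^2)))) (at z)"
        using DERIV_diff[OF d1 DERIV_const[of 1]] by simp
      show ?thesis by (rule DERIV_cmult[OF d2])
    qed
    moreover have "(1 / (2 * complex_of_real a)) * (exp (complex_of_real a * Ln (w z)) * (complex_of_real a * (inverse (w z) * (2 / (1 - z)^2))))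
        = (2 * complex_of_real a * ka a z + 1) / (1 - z^2)"
      using key False e z bf(4) by (simp add: field_simps)
    ultimately have "((\<lambda>y. (1 / (2 * complex_of_real a)) * (exp (complex_of_real a * Ln (w y)) - 1)) has_field_derivative
        (2 * complex_of_real a * ka a z + 1) / (1 - z^2)) (at z)" by simp
    then show ?thesis
      by (rule has_field_derivative_transform_within_open[where S="ball 0 1"]) (use e z in auto)
  qed
qed

theorem theorem2p4:
  fixes a lam :: real and h g :: "complex \<Rightarrow> complex"
  assumes lam: "0 \<le> lam" "lam < 1"
    and hol: "h holomorphic_on ball 0 1" "g holomorphic_on ball 0 1"
    and norm: "h 0 = 0" "deriv h 0 = 1" "g 0 = 0"
    and diff: "\<forall>z \<in> ball 0 1. h z - g z = ka a z"
    and dil: "\<forall>z \<in> ball 0 1. deriv h z \<noteq> 0 \<and> deriv g z / deriv h z = complex_of_real lam * z"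
  shows "norm (taylor_coeff h 2) \<le> \<bar>a\<bar> + lam / 2
    \<and> norm (taylor_coeff h 3) \<le> (lam^2 + 2*\<bar>a\<bar>*lam + 2*a^2 + 1) / 3
    \<and> norm (taylor_coeff h 4) \<le> \<bar>a\<bar>^3 / 3 + 2 * \<bar>a\<bar> / 3 + lam * (lam^2 + 2*\<bar>a\<bar>*lam + 2*a^2 + 1) / 4
    \<and> norm (taylor_coeff g 3) \<le> lam^2 / 3 + 2 * \<bar>a\<bar> * lam / 3
    \<and> norm (taylor_coeff g 4) \<le> lam * (lam^2 + 2*\<bar>a\<bar>*lam + 2*a^2 + 1) / 4
    \<and> (0 \<le> a \<longrightarrow>
         norm (taylor_coeff h 2) = \<bar>a\<bar> + lam / 2
       \<and> norm (taylor_coeff h 3) = (lam^2 + 2*\<bar>a\<bar>*lam + 2*a^2 + 1) / 3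
       \<and> norm (taylor_coeff h 4) = \<bar>a\<bar>^3 / 3 + 2 * \<bar>a\<bar> / 3 + lam * (lam^2 + 2*\<bar>a\<bar>*lam + 2*a^2 + 1) / 4
       \<and> norm (taylor_coeff g 3) = lam^2 / 3 + 2 * \<bar>a\<bar> * lam / 3
       \<and> norm (taylor_coeff g 4) = lam * (lam^2 + 2*\<bar>a\<bar>*lam + 2*a^2 + 1) / 4)"
proof -
  define S :: "complex set" where "S = ball 0 1"
  have S: "open S" "(0::complex) \<in> S" by (auto simp: S_def)
  define K where "K = (\<lambda>z. h z - g z)"
  define c where "c = complex_of_real (2 * a)"
  define L where "L = complex_of_real lam"
  have hS: "h holomorphic_on S" and gS: "g holomorphic_on S" using hol by (auto simp: S_def)
  have KS: "K holomorphic_on S" unfolding K_def using hS gS by (intro holomorphic_intros)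
  have dKS: "deriv K holomorphic_on S" using KS S by (intro holomorphic_deriv)
  have dhS: "deriv h holomorphic_on S" using hS S by (intro holomorphic_deriv)
  have dK: "deriv K z = (c * K z + 1) / (1 - z^2)" if z: "z \<in> S" for z
  proof -
    have "(K has_field_derivative (2 * complex_of_real a * ka a z + 1) / (1 - z^2)) (at z)"
      by (rule has_field_derivative_transform_within_open[OF ka_deriv[of z a], where S=S])
         (use z S diff in \<open>auto simp: S_def K_def\<close>)
    then have "deriv K z = (2 * complex_of_real a * ka a z + 1) / (1 - z^2)" by (rule DERIV_imp_deriv)
    moreover have "K z = ka a z" using diff z by (auto simp: S_def K_def)
    ultimately show ?thesis by (simp add: c_def)
  qed
  have ode1: "(1 - z*z) * deriv K z = c * K z + 1" if z: "z \<in> S" for z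
    using dK[OF z] ball_facts(4)[of z] z by (simp add: S_def power2_eq_square)
  have ode2: "(1 - L*z) * deriv h z = deriv K z" if z: "z \<in> S" for z
  proof -
    have "(K has_field_derivative deriv h z - deriv g z) (at z)"
      unfolding K_def using hS gS S z by (intro DERIV_diff holomorphic_derivI) auto
    then have "deriv K z = deriv h z - deriv g z" by (rule DERIV_imp_deriv)
    moreover have "deriv g z = L * z * deriv h z"
    proof -
      have "deriv h z \<noteq> 0" "deriv g z / deriv h z = L * z" using dil z by (auto simp: S_def L_def)
      then show ?thesis by (simp add: divide_eq_eq)
    qed
    ultimately show ?thesis by (simp add: algebra_simps)
  qed
  define p where "p = (\<lambda>z::complex. 1 - z*z)"
  define q where "q = (\<lambda>z::complex. 1 - L*z)"
  have dp: "deriv p = (\<lambda>z. (-2) * z)"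
  proof
    fix z show "deriv p z = (-2) * z" unfolding p_def
      by (rule DERIV_imp_deriv) (auto intro!: derivative_eq_intros)
  qed
  have dq: "deriv q = (\<lambda>z. - L)"
  proof
    fix z show "deriv q z = - L" unfolding q_def
      by (rule DERIV_imp_deriv) (auto intro!: derivative_eq_intros)
  qed
  have hp: "(deriv ^^ Suc n) p z = (if n = 0 then (-2) * z else if n = 1 then -2 else 0)" for n z
    unfolding funpow_Suc_right comp_def dp higher_deriv_linear by simp
  have hq: "(deriv ^^ Suc n) q z = (if n = 0 then - L else 0)" for n z
    by (simp add: funpow_Suc_right dq del: funpow.simps)
  have hd: "(deriv ^^ n) (deriv F) z = (deriv ^^ Suc n) F z" for n F z
    by (simp add: funpow_Suc_right del: funpow.simps)
  have pS: "p holomorphic_on S" "q holomorphic_on S" unfolding p_def q_def by (auto intro!: holomorphic_intros)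
  have gen1: "(\<Sum>i = 0..n. of_nat (n choose i) * (deriv ^^ i) p 0 * (deriv ^^ Suc (n-i)) K 0)
      = c * (deriv ^^ n) K 0 + (if n = 0 then 1 else 0)" for n
  proof -
    have "(deriv ^^ n) (\<lambda>w. p w * deriv K w) 0 = (deriv ^^ n) (\<lambda>w. c * K w + 1) 0"
      by (rule higher_deriv_transform_within_open[OF _ _ S])
         (use pS KS dKS S ode1 in \<open>auto intro!: holomorphic_intros simp: p_def\<close>)
    also have "\<dots> = (deriv ^^ n) (\<lambda>w. c * K w) 0 + (deriv ^^ n) (\<lambda>w. 1) 0"
      by (rule higher_deriv_add[OF _ _ S]) (use KS in \<open>auto intro!: holomorphic_intros\<close>)
    also have "\<dots> = c * (deriv ^^ n) K 0 + (if n = 0 then 1 else 0)"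
      using higher_deriv_cmult[OF KS S(2) S(1)] by simp
    finally show ?thesis using higher_deriv_mult[OF pS(1) dKS S, of n] by (simp add: hd)
  qed
  have gen2: "(\<Sum>i = 0..n. of_nat (n choose i) * (deriv ^^ i) q 0 * (deriv ^^ Suc (n-i)) h 0)
      = (deriv ^^ Suc n) K 0" for n
  proof -
    have "(deriv ^^ n) (\<lambda>w. q w * deriv h w) 0 = (deriv ^^ n) (deriv K) 0"
      by (rule higher_deriv_transform_within_open[OF _ _ S])
         (use pS dhS dKS S ode2 in \<open>auto intro!: holomorphic_intros simp: q_def\<close>)
    then show ?thesis using higher_deriv_mult[OF pS(2) dhS S, of n] by (simp add: hd)
  qed
  have gK: "(deriv ^^ n) K 0 = (deriv ^^ n) h 0 - (deriv ^^ n) g 0" for n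
    unfolding K_def by (rule higher_deriv_diff[OF hS gS S])
  have p0: "p 0 = 1" "q 0 = 1" by (auto simp: p_def q_def)
  have K0: "K 0 = 0" using norm by (simp add: K_def)
  note e1 = gen1[of 0] gen1[of 1] gen1[of 2] gen1[of 3]
  note e2 = gen2[of 0] gen2[of 1] gen2[of 2] gen2[of 3]
  have K1: "(deriv ^^ 1) K 0 = 1" using e1(1) K0 p0 by simp
  have hp0: "deriv p 0 = 0" "deriv (deriv p) 0 = -2" "deriv (deriv (deriv p)) 0 = 0"
    using hp[of 0 0] hp[of 1 0] hp[of 2 0] by (simp_all add: eval_nat_numeral)
  have hq0: "deriv q 0 = -L" "deriv (deriv q) 0 = 0" "deriv (deriv (deriv q)) 0 = 0"
    using hq[of 0 0] hq[of 1 0] hq[of 2 0] by (simp_all add: eval_nat_numeral)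
  have K2: "(deriv ^^ 2) K 0 = c" using e1(2) K1 p0
    by (simp add: eval_nat_numeral sum.atLeast0_atMost_Suc hp0)
  have K3: "(deriv ^^ 3) K 0 = c^2 + 2" using e1(3) K1 K2 p0
    by (simp add: eval_nat_numeral sum.atLeast0_atMost_Suc hp0 algebra_simps)
  have K4: "(deriv ^^ 4) K 0 = c^3 + 8 * c" using e1(4) K1 K2 K3 p0
    by (simp add: eval_nat_numeral sum.atLeast0_atMost_Suc hp0 algebra_simps)
  have H1: "(deriv ^^ 1) h 0 = 1" using e2(1) K1 p0 by simp
  have H2: "(deriv ^^ 2) h 0 = c + L" using e2(2) K2 H1 p0
    by (simp add: eval_nat_numeral sum.atLeast0_atMost_Suc hq0 algebra_simps)
  have H3: "(deriv ^^ 3) h 0 = c^2 + 2 + 2 * L * (c + L)" using e2(3) K3 H2 H1 p0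
    by (simp add: eval_nat_numeral sum.atLeast0_atMost_Suc hq0 algebra_simps)
  have H4: "(deriv ^^ 4) h 0 = c^3 + 8 * c + 3 * L * (c^2 + 2 + 2 * L * (c + L))" using e2(4) K4 H3 H2 H1 p0
    by (simp add: eval_nat_numeral sum.atLeast0_atMost_Suc hq0 algebra_simps)
  define P where "P = lam^2 + 2*a*lam + 2*a^2 + 1"
  have t2: "taylor_coeff h 2 = complex_of_real (a + lam/2)"
    unfolding taylor_coeff_def H2 c_def L_def by (simp add: field_simps)
  have t3: "taylor_coeff h 3 = complex_of_real (P / 3)"
    unfolding taylor_coeff_def H3 c_def L_def P_def by (simp add: field_simps eval_nat_numeral)
  have t4: "taylor_coeff h 4 = complex_of_real ((a^3 + 2*a)/3 + lam * P / 4)"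
    unfolding taylor_coeff_def H4 c_def L_def P_def by (simp add: field_simps eval_nat_numeral)
  have u3: "taylor_coeff g 3 = complex_of_real (lam^2/3 + 2*a*lam/3)"
    using gK[of 3] K3 H3 unfolding taylor_coeff_def c_def L_def
    by (simp add: field_simps eval_nat_numeral)
  have u4: "taylor_coeff g 4 = complex_of_real (lam * P / 4)"
    using gK[of 4] K4 H4 unfolding taylor_coeff_def c_def L_def P_def
    by (simp add: field_simps eval_nat_numeral)
  define Q where "Q = lam^2 + 2*\<bar>a\<bar>*lam + 2*a^2 + 1"
  have hP: "P > 0" unfolding P_def
    by (smt (verit) zero_le_power2 power2_sum power2_eq_square)
  have al: "a * lam \<le> \<bar>a\<bar> * lam" using lam(1) by (simp add: mult_right_mono)
  have al2: "-(\<bar>a\<bar> * lam) \<le> a * lam" using lam(1) 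
  proof -
    have "-\<bar>a\<bar> \<le> a" by simp
    from mult_right_mono[OF this lam(1)] show ?thesis by simp
  qed
  have hPQ: "P \<le> Q" using al unfolding P_def Q_def by simp
  have a3: "\<bar>a^3 + 2*a\<bar> = \<bar>a\<bar>^3 + 2*\<bar>a\<bar>"
  proof -
    have "a^3 + 2*a = a * (a^2 + 2)" by (simp add: algebra_simps power2_eq_square power3_eq_cube)
    then have "\<bar>a^3 + 2*a\<bar> = \<bar>a\<bar> * (a^2 + 2)" by (simp add: abs_mult)
    also have "\<dots> = \<bar>a\<bar>^3 + 2*\<bar>a\<bar>" by (simp add: algebra_simps power2_eq_square power3_eq_cube)
    finally show ?thesis .
  qed
  have i1: "\<bar>a + lam/2\<bar> \<le> \<bar>a\<bar> + lam/2" using lam(1) by simp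
  have i2: "\<bar>P/3\<bar> \<le> Q/3" using hP hPQ by simp
  have i3: "\<bar>(a^3 + 2*a)/3 + lam * P / 4\<bar> \<le> \<bar>a\<bar>^3/3 + 2*\<bar>a\<bar>/3 + lam * Q / 4"
  proof -
    have "\<bar>(a^3 + 2*a)/3 + lam * P / 4\<bar> \<le> \<bar>(a^3 + 2*a)/3\<bar> + \<bar>lam * P / 4\<bar>" by (rule abs_triangle_ineq)
    also have "\<bar>(a^3 + 2*a)/3\<bar> = (\<bar>a\<bar>^3 + 2*\<bar>a\<bar>)/3" using a3 by simp
    also have "\<bar>lam * P / 4\<bar> = lam * P / 4" using hP lam(1) by simp
    also have "lam * P / 4 \<le> lam * Q / 4" using hPQ lam(1) by (simp add: mult_left_mono)
    finally show ?thesis by (simp add: add_divide_distrib)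
  qed
  have i4: "\<bar>lam^2/3 + 2*a*lam/3\<bar> \<le> lam^2/3 + 2*\<bar>a\<bar>*lam/3"
  proof -
    have e: "2*a*lam/3 = 2*(a*lam)/3" "2*\<bar>a\<bar>*lam/3 = 2*(\<bar>a\<bar>*lam)/3" by simp_all
    show ?thesis unfolding e using al al2 zero_le_power2[of lam] by linarith
  qed
  have i5: "\<bar>lam * P / 4\<bar> \<le> lam * Q / 4" using hP hPQ lam(1) by (simp add: mult_left_mono)
  have eqs: "0 \<le> a \<Longrightarrow> \<bar>a + lam/2\<bar> = \<bar>a\<bar> + lam/2 \<and> \<bar>P/3\<bar> = Q/3
     \<and> \<bar>(a^3 + 2*a)/3 + lam * P / 4\<bar> = \<bar>a\<bar>^3/3 + 2*\<bar>a\<bar>/3 + lam * Q / 4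
     \<and> \<bar>lam^2/3 + 2*a*lam/3\<bar> = lam^2/3 + 2*\<bar>a\<bar>*lam/3 \<and> \<bar>lam * P / 4\<bar> = lam * Q / 4"
  proof -
    assume a0: "0 \<le> a"
    then have PQ: "P = Q" unfolding P_def Q_def by simp
    have "0 \<le> a^3 + 2*a" using a0 by simp
    then show ?thesis using a0 PQ hP lam(1) by simp
  qed
  show ?thesis unfolding t2 t3 t4 u3 u4 norm_of_real
    using i1 i2 i3 i4 i5 eqs unfolding Q_def by simp
qed

end
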